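(* (Poisson case as $\alpha\to0$.) Let $\gamma>0$, $\boldsymbol{z}\in\mathbb{N}^n$ and $\boldsymbol{y}=\gamma\boldsymbol{z}$. For $\alpha\in(0,1)$ let $\boldsymbol{\omega}=(\omega_1,\dots,\omega_n)$ have independent coordinates $\omega_i\sim\mathrm{Bin}(z_i,\alpha)$, and set $\boldsymbol{y}_1=\frac{\boldsymbol{y}-\gamma\boldsymbol{\omega}}{1-\alpha}$ and $\boldsymbol{y}_2=\frac1\alpha\boldsymbol{y}-\frac{1-\alpha}\alpha\boldsymbol{y}_1=\gamma\boldsymbol{\omega}/\alpha$. Let $f:\mathbb{R}^n\to\mathbb{R}^n$ be continuous. Then $$\lim_{\alpha\to0}\Big(\mathbb{E}_{\boldsymbol{\omega}}\|f(\boldsymbol{y}_1)-\boldsymbol{y}_2\|_2^2-\mathbb{E}_{\boldsymbol{\omega}}\|\boldsymbol{y}_2-\boldsymbol{y}\|_2^2\Big)=\|f(\boldsymbol{y})-\boldsymbol{y}\|_2^2+2\sum_{i=1}^n y_i\big(f_i(\boldsymbol{y})-f_i(\boldsymbol{y}-\gamma\boldsymbol{e}_i)\big),$$ where $\boldsymbol{e}_i$ is the $i$-th canonical basis vector of $\mathbb{R}^n$.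
   Context: This is the GR2R re-corruption for the scaled Poisson model $\boldsymbol{y}=\gamma\boldsymbol{z}$, $\boldsymbol{z}\sim\mathcal{P}(\boldsymbol{x}/\gamma)$ (independent Poisson coordinates). The subtracted term $\mathbb{E}_{\boldsymbol{\omega}}\|\boldsymbol{y}_2-\boldsymbol{y}\|_2^2$ does not depend on $f$. *)

theory Defs
  imports "HOL-Analysis.Analysis" "HOL-Probability.Probability"
begin

definition omega_pmf :: "('n::finite \<Rightarrow> nat) \<Rightarrow> real \<Rightarrow> ('n \<Rightarrow> nat) pmf" where
  "omega_pmf z \<alpha> = Pi_pmf UNIV 0 (\<lambda>i. binomial_pmf (z i) \<alpha>)"

end

theory Submission imports Defs begin

definition PP :: "('n::finite \<Rightarrow> nat) \<Rightarrow> real \<Rightarrow> ('n \<Rightarrow> nat) \<Rightarrow> real" where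
  "PP z a w = (\<Prod>k\<in>UNIV. real (z k choose w k) * a ^ w k * (1 - a) ^ (z k - w k))"

definition SS :: "('n::finite \<Rightarrow> nat) \<Rightarrow> ('n \<Rightarrow> nat) set" where
  "SS z = Pi\<^sub>E UNIV (\<lambda>i. {..z i + 1})"

lemma SS_finite: "finite (SS z)" unfolding SS_def by (intro finite_PiE) auto

lemma pmf_omega: "0 \<le> a \<Longrightarrow> a \<le> 1 \<Longrightarrow> pmf (omega_pmf z a) w = PP z a w"
  unfolding omega_pmf_def PP_def by (subst pmf_Pi') auto

lemma PP_zero: "\<not> w k \<le> z k \<Longrightarrow> PP z a w = 0"
  unfolding PP_def by (intro prod_zero) (auto simp: not_le)

lemma exp_omega:
  assumes "0 \<le> a" "a \<le> 1"
  shows "measure_pmf.expectation (omega_pmf z a) (g :: _ \<Rightarrow> real) = (\<Sum>w\<in>SS z. PP z a w * g w)"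
proof -
  have "measure_pmf.expectation (omega_pmf z a) g = (\<Sum>w\<in>SS z. pmf (omega_pmf z a) w *\<^sub>R g w)"
  proof (rule integral_measure_pmf[OF SS_finite])
    fix w assume "w \<in> set_pmf (omega_pmf z a)"
    hence "PP z a w \<noteq> 0" using pmf_omega[OF assms] by (metis set_pmf_iff)
    hence "\<forall>k. w k \<le> z k" using PP_zero by metis
    thus "w \<in> SS z" unfolding SS_def by (auto simp: PiE_UNIV_domain intro: le_SucI)
  qed
  thus ?thesis by (simp add: pmf_omega[OF assms])
qed

lemma sum_conc:
  assumes "finite S" "c \<in> S" "\<And>w. w \<in> S \<Longrightarrow> ((\<lambda>x. h w x) \<longlongrightarrow> (if w = c then L else 0)) F"
  shows "((\<lambda>x. \<Sum>w\<in>S. h w x) \<longlongrightarrow> (L::real)) F"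
proof -
  have "((\<lambda>x. \<Sum>w\<in>S. h w x) \<longlongrightarrow> (\<Sum>w\<in>S. (if w = c then L else 0))) F"
    by (rule tendsto_sum) (use assms in auto)
  thus ?thesis using assms by simp
qed

lemma PP_lim: "((\<lambda>a. PP z a w) \<longlongrightarrow> (if w = (\<lambda>_. 0) then 1 else 0)) (at_right 0)"
proof -
  have "((\<lambda>a. PP z a w) \<longlongrightarrow> PP z 0 w) (at_right 0)"
    unfolding PP_def by (intro tendsto_intros)
  moreover have "PP z 0 w = (if w = (\<lambda>_. 0) then 1 else 0)"
  proof (cases "w = (\<lambda>_. 0)")
    case True then show ?thesis by (simp add: PP_def)
  next
    case False then obtain k where "w k \<noteq> 0" by auto
    then show ?thesis using False unfolding PP_def by (intro prod_zero[THEN trans]) (auto intro!: bexI[of _ k])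
  qed
  ultimately show ?thesis by simp
qed


definition ee :: "'n \<Rightarrow> 'n \<Rightarrow> nat" where "ee i = (\<lambda>k. if k = i then 1 else 0)"

lemma Q_lim:
  fixes z :: "'n::finite \<Rightarrow> nat"
  shows "((\<lambda>a. PP z a w * real (w i) / a) \<longlongrightarrow> (if w = ee i then real (z i) else 0)) (at_right 0)"
proof (cases "w i = 0")
  case True
  hence "w \<noteq> ee i" by (auto simp: ee_def fun_eq_iff)
  then show ?thesis using True by simp
next
  case False
  define T where "T k a = real (z k choose w k) * a ^ w k * (1 - a) ^ (z k - w k)" for k a
  define G where "G a = real (w i) * real (z i choose w i) * a^(w i - 1) * (1-a)^(z i - w i) * (\<Prod>k\<in>UNIV-{i}. T k a)" for a
  have eq: "PP z a w * real (w i) / a = G a" if "a > 0" for a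
  proof -
    have "PP z a w = T i a * (\<Prod>k\<in>UNIV-{i}. T k a)"
      unfolding PP_def T_def by (subst prod.remove[of _ i]) auto
    moreover have "a ^ w i = a * a ^ (w i - 1)" using False by (metis power_eq_if)
    ultimately show ?thesis using that unfolding G_def T_def by (simp add: field_simps)
  qed
  have "(G \<longlongrightarrow> G 0) (at_right 0)" unfolding G_def T_def by (intro tendsto_intros)
  hence lim: "((\<lambda>a. PP z a w * real (w i) / a) \<longlongrightarrow> G 0) (at_right 0)"
    by (rule Lim_transform_eventually) (auto simp: eventually_at_right_field eq intro!: exI[of _ 1])
  have "G 0 = (if w = ee i then real (z i) else 0)"
  proof (cases "w = ee i")
    case True
    then show ?thesis by (simp add: G_def T_def ee_def)
  next
    case ne: False
    show ?thesis
    proof (cases "w i = 1")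
      case True
      with ne obtain k where "k \<noteq> i" "w k \<noteq> 0" by (auto simp: ee_def fun_eq_iff split: if_splits)
      hence "(\<Prod>k\<in>UNIV-{i}. T k 0) = 0" by (intro prod_zero) (auto simp: T_def intro!: bexI[of _ k])
      then show ?thesis using ne by (simp add: G_def)
    next
      case False
      with \<open>w i \<noteq> 0\<close> have "w i - 1 \<noteq> 0" by simp
      then show ?thesis using ne by (simp add: G_def)
    qed
  qed
  then show ?thesis using lim by simp
qed


lemma normsq_cart: "(norm (x::real^'n))\<^sup>2 = (\<Sum>i\<in>UNIV. (x$i)\<^sup>2)"
  unfolding power2_norm_eq_inner inner_vec_def by (simp add: power2_eq_square)

theorem mainTheorem6:
  fixes \<gamma> :: real and z :: "'n::finite \<Rightarrow> nat" and f :: "real^'n \<Rightarrow> real^'n"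
  assumes "\<gamma> > 0"
    and "continuous_on UNIV f"
  defines "y \<equiv> (\<chi> i. \<gamma> * real (z i))"
  defines "y1 \<equiv> (\<lambda>\<alpha> (\<omega>::'n \<Rightarrow> nat). (1 / (1 - \<alpha>)) *\<^sub>R (y - \<gamma> *\<^sub>R (\<chi> i. real (\<omega> i))))"
  defines "y2 \<equiv> (\<lambda>\<alpha> (\<omega>::'n \<Rightarrow> nat). (1 / \<alpha>) *\<^sub>R y - ((1 - \<alpha>) / \<alpha>) *\<^sub>R y1 \<alpha> \<omega>)"
  shows "((\<lambda>\<alpha>. measure_pmf.expectation (omega_pmf z \<alpha>) (\<lambda>\<omega>. (norm (f (y1 \<alpha> \<omega>) - y2 \<alpha> \<omega>))\<^sup>2)
              - measure_pmf.expectation (omega_pmf z \<alpha>) (\<lambda>\<omega>. (norm (y2 \<alpha> \<omega> - y))\<^sup>2))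
          \<longlongrightarrow> (norm (f y - y))\<^sup>2
              + 2 * (\<Sum>i\<in>UNIV. y $ i * (f y $ i - f (y - \<gamma> *\<^sub>R axis i 1) $ i)))
         (at_right 0)"
proof -
  define A where "A a = (\<Sum>w\<in>SS z. PP z a w * ((norm (f (y1 a w)))\<^sup>2 - (norm y)\<^sup>2))" for a
  define B where "B i a = (\<Sum>w\<in>SS z. (PP z a w * real (w i) / a) * (2 * \<gamma> * (y$i - f (y1 a w) $ i)))" for i a
  have y2eq: "y2 a w = (\<chi> i. \<gamma> * real (w i) / a)" if "0 < a" "a < 1" for a w
    using that unfolding y2_def y1_def by (simp add: vec_eq_iff field_simps)
  have pw: "(norm (f (y1 a w) - y2 a w))\<^sup>2 - (norm (y2 a w - y))\<^sup>2 =
     (norm (f (y1 a w)))\<^sup>2 - (norm y)\<^sup>2 + (\<Sum>i\<in>UNIV. (real (w i) / a) * (2 * \<gamma> * (y$i - f (y1 a w) $ i)))"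
    if "0 < a" "a < 1" for a w
  proof -
    have "(norm (f (y1 a w) - y2 a w))\<^sup>2 - (norm (y2 a w - y))\<^sup>2
      = (\<Sum>i\<in>UNIV. (f (y1 a w) $ i - \<gamma> * real (w i) / a)\<^sup>2 - (\<gamma> * real (w i) / a - y $ i)\<^sup>2)"
      unfolding normsq_cart y2eq[OF that] by (simp add: sum_subtractf)
    also have "\<dots> = (\<Sum>i\<in>UNIV. (f (y1 a w) $ i)\<^sup>2 - (y$i)\<^sup>2 + (real (w i) / a) * (2 * \<gamma> * (y$i - f (y1 a w) $ i)))"
      by (intro sum.cong refl) (simp add: power2_eq_square algebra_simps)
    also have "\<dots> = (norm (f (y1 a w)))\<^sup>2 - (norm y)\<^sup>2 + (\<Sum>i\<in>UNIV. (real (w i) / a) * (2 * \<gamma> * (y$i - f (y1 a w) $ i)))"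
      by (simp add: normsq_cart sum.distrib sum_subtractf)
    finally show ?thesis .
  qed
  have Eeq: "measure_pmf.expectation (omega_pmf z a) (\<lambda>\<omega>. (norm (f (y1 a \<omega>) - y2 a \<omega>))\<^sup>2)
              - measure_pmf.expectation (omega_pmf z a) (\<lambda>\<omega>. (norm (y2 a \<omega> - y))\<^sup>2) = A a + (\<Sum>i\<in>UNIV. B i a)"
    if a: "0 < a" "a < 1" for a
  proof -
    have "measure_pmf.expectation (omega_pmf z a) (\<lambda>\<omega>. (norm (f (y1 a \<omega>) - y2 a \<omega>))\<^sup>2)
              - measure_pmf.expectation (omega_pmf z a) (\<lambda>\<omega>. (norm (y2 a \<omega> - y))\<^sup>2)
        = (\<Sum>w\<in>SS z. PP z a w * ((norm (f (y1 a w) - y2 a w))\<^sup>2 - (norm (y2 a w - y))\<^sup>2))"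
      using a by (simp add: exp_omega sum_subtractf right_diff_distrib)
    also have "\<dots> = (\<Sum>w\<in>SS z. PP z a w * ((norm (f (y1 a w)))\<^sup>2 - (norm y)\<^sup>2)
         + (\<Sum>i\<in>UNIV. (PP z a w * real (w i) / a) * (2 * \<gamma> * (y$i - f (y1 a w) $ i))))"
      by (intro sum.cong refl) (simp add: pw[OF a] distrib_left sum_distrib_left mult.assoc)
    also have "\<dots> = A a + (\<Sum>i\<in>UNIV. B i a)"
      unfolding A_def B_def by (simp add: sum.distrib sum.swap[of _ UNIV])
    finally show ?thesis .
  qed
  have fc: "isCont f x" for x using assms(2) by (simp add: continuous_on_eq_continuous_at)
  have flim: "((\<lambda>a. f (y1 a w)) \<longlongrightarrow> f (y1 0 w)) (at_right 0)" for w
  proof (rule isCont_tendsto_compose[OF fc])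
    show "((\<lambda>a. y1 a w) \<longlongrightarrow> y1 0 w) (at_right 0)" unfolding y1_def by (intro tendsto_intros) auto
  qed
  have y10: "y1 0 (\<lambda>_. 0) = y" by (simp add: y1_def vec_eq_iff)
  have y1e: "y1 0 (ee i) = y - \<gamma> *\<^sub>R axis i 1" for i by (simp add: y1_def vec_eq_iff ee_def axis_def)
  have Alim: "(A \<longlongrightarrow> (norm (f y))\<^sup>2 - (norm y)\<^sup>2) (at_right 0)"
    unfolding A_def
  proof (rule sum_conc[OF SS_finite])
    show "(\<lambda>_. 0) \<in> SS z" by (simp add: SS_def PiE_UNIV_domain)
    fix w
    show "((\<lambda>a. PP z a w * ((norm (f (y1 a w)))\<^sup>2 - (norm y)\<^sup>2)) \<longlongrightarrow> (if w = (\<lambda>_. 0) then (norm (f y))\<^sup>2 - (norm y)\<^sup>2 else 0)) (at_right 0)"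
      using tendsto_mult[OF PP_lim[of z w] tendsto_diff[OF tendsto_power[OF tendsto_norm[OF flim[of w]]] tendsto_const[of "(norm y)\<^sup>2"]], of 2]
      by (cases "w = (\<lambda>_. 0)") (simp_all add: y10)
  qed
  have Blim: "(B i \<longlongrightarrow> real (z i) * (2 * \<gamma> * (y$i - f (y - \<gamma> *\<^sub>R axis i 1) $ i))) (at_right 0)" for i
    unfolding B_def
  proof (rule sum_conc[OF SS_finite])
    show "ee i \<in> SS z" by (simp add: SS_def ee_def PiE_UNIV_domain)
    fix w
    show "((\<lambda>a. (PP z a w * real (w i) / a) * (2 * \<gamma> * (y$i - f (y1 a w) $ i))) \<longlongrightarrow> (if w = ee i then real (z i) * (2 * \<gamma> * (y$i - f (y - \<gamma> *\<^sub>R axis i 1) $ i)) else 0)) (at_right 0)"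
      using tendsto_mult[OF Q_lim[of z w i] tendsto_mult[OF tendsto_const[of "2*\<gamma>"] tendsto_diff[OF tendsto_const[of "y$i"] tendsto_vec_nth[OF flim[of w], of i]]]]
      by (cases "w = ee i") (simp_all add: y1e)
  qed
  have lim: "((\<lambda>a. A a + (\<Sum>i\<in>UNIV. B i a)) \<longlongrightarrow> ((norm (f y))\<^sup>2 - (norm y)\<^sup>2) + (\<Sum>i\<in>UNIV. real (z i) * (2 * \<gamma> * (y$i - f (y - \<gamma> *\<^sub>R axis i 1) $ i)))) (at_right 0)"
    by (intro tendsto_add Alim tendsto_sum Blim)
  have val: "((norm (f y))\<^sup>2 - (norm y)\<^sup>2) + (\<Sum>i\<in>UNIV. real (z i) * (2 * \<gamma> * (y$i - f (y - \<gamma> *\<^sub>R axis i 1) $ i)))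
     = (norm (f y - y))\<^sup>2 + 2 * (\<Sum>i\<in>UNIV. y $ i * (f y $ i - f (y - \<gamma> *\<^sub>R axis i 1) $ i))"
  proof -
    have yi: "real (z i) * \<gamma> = y $ i" for i by (simp add: y_def)
    show ?thesis unfolding normsq_cart
      by (simp add: sum_subtractf[symmetric] sum.distrib[symmetric] sum_distrib_left, intro sum.cong refl)
         (simp add: yi[symmetric] power2_eq_square algebra_simps)
  qed
  show ?thesis
    apply (rule Lim_transform_eventually[OF lim[unfolded val]])
    apply (auto simp: eventually_at_right_field Eeq intro!: exI[of _ 1])
    done
qed

end
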